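(* Let $t\mapsto\zeta(t)=(\xi(t),\eta(t))$, $t\in I$, be a solution of the alternative system (Alt) such that for all $t\in I$: $f_{\mathrm{holdup}}'(L^j(t))\neq0$ for $j=1,\dots,S-1$ and $\sum_{i=1}^C\partial_Tf_{\mathrm{vle},i}(P(t),T^j(t),\mathbf x^j(t))\neq0$ for $j=1,\dots,S$. Then the Jacobian $D_\eta g(\zeta(t))$ is non-singular for every $t\in I$ if and only if for every $t\in I$ $-\epsilon f_{\mathrm{hl}}(T^S,\mathbf x^S)-\epsilon\,\mathbf a(P,T^S,\mathbf x^S)\cdot(\mathbf y^S-\mathbf x^S)-(1-\epsilon)f_{\mathrm{hl}}(T^{\mathrm{cond}},\mathbf y^S)+f_{\mathrm{hv}}(T^S,\mathbf y^S)\neq0$ and, for every $j\in\{S-1,\dots,1\}$, $-f_{\mathrm{hl}}(T^j,\mathbf x^j)-\mathbf a(P,T^j,\mathbf x^j)\cdot(\mathbf y^j-\mathbf x^j)+f_{\mathrm{hv}}(T^j,\mathbf y^j)\neq0$ (all quantities evaluated at time $t$).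
   Context: Fix integers $S\ge 2$, $C\ge 2$ and an interval $I\subset\mathbb R$. Given are real functions $f_{\mathrm{vle},i}(P,T,\mathbf x)$ ($i=1,\dots,C$) and $f_{\mathrm{hl}}(T,\mathbf x)$ that are twice continuously differentiable, and continuously differentiable $f_{\mathrm{hv}}(T,\mathbf y)$, $f_{\mathrm{holdup}}(L)$. Controls are continuously differentiable real functions $\epsilon,P,Q,T^{\mathrm{cond}}$ on $I$. State variables: $n^j,H^j,T^j,V^j$, $\mathbf x^j,\mathbf y^j\in\mathbb R^C$ ($j=1,\dots,S$), $L^j$ ($j=1,\dots,S-1$); a solution is a tuple of continuously differentiable state functions satisfying all equations at every $t\in I$. "$2\le j\le S-1$" marks middle-stage equations. Wherever $\sum_i\partial_Tf_{\mathrm{vle},i}(P,T,\mathbf x)\neq0$ define $\mathbf a(P,T,\mathbf x):=\nabla_{\mathbf x}f_{\mathrm{hl}}(T,\mathbf x)-\partial_Tf_{\mathrm{hl}}(T,\mathbf x)\frac{\sum_i\nabla_{\mathbf x}f_{\mathrm{vle},i}(P,T,\mathbf x)}{\sum_i\partial_Tf_{\mathrm{vle},i}(P,T,\mathbf x)}$, $b(P,T,\mathbf x):=-\partial_Tf_{\mathrm{hl}}(T,\mathbf x)\frac{\sum_i\partial_Pf_{\mathrm{vle},i}(P,T,\mathbf x)}{\sum_i\partial_Tf_{\mathrm{vle},i}(P,T,\mathbf x)}$. System (Alt) consists of (TM) $\dot n^1=L^1-V^1$; $\dot n^j=L^j-V^j-L^{j-1}+V^{j-1}$ ($2\le j\le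 S-1$); $\dot n^S=-\epsilon V^S-L^{S-1}+V^{S-1}$; (CM$_0$) for $i=1,\dots,C-1$: $\dot x_i^1=\big(L^1(x_i^2-x_i^1)-V^1(y_i^1-x_i^1)\big)/n^1$; $\dot x_i^j=\big(L^j(x_i^{j+1}-x_i^j)-V^j(y_i^j-x_i^j)+V^{j-1}(y_i^{j-1}-x_i^j)\big)/n^j$ ($2\le j\le S-1$); $\dot x_i^S=\big(\epsilon V^S(x_i^S-y_i^S)+V^{S-1}(y_i^{S-1}-x_i^S)\big)/n^S$; and the algebraic equations $g=0$ where (left minus right side): $\mathrm{aebal}^1=(L^1-V^1)f_{\mathrm{hl}}(T^1,\mathbf x^1)+\mathbf a(P,T^1,\mathbf x^1)\cdot\big(L^1(\mathbf x^2-\mathbf x^1)-V^1(\mathbf y^1-\mathbf x^1)\big)+n^1b(P,T^1,\mathbf x^1)\dot P-\big(L^1f_{\mathrm{hl}}(T^2,\mathbf x^2)-V^1f_{\mathrm{hv}}(T^1,\mathbf y^1)+Q\big)$; for $2\le j\le S-1$: $\mathrm{aebal}^j=(L^j-V^j-L^{j-1}+V^{j-1})f_{\mathrm{hl}}(T^j,\mathbf x^j)+\mathbf a(P,T^j,\mathbf x^j)\cdot\big(L^j(\mathbf x^{j+1}-\mathbf x^j)-V^j(\mathbf y^j-\mathbf x^j)+V^{j-1}(\mathbf y^{j-1}-\mathbf x^j)\big)+n^jb(P,T^j,\mathbf x^j)\dot P-\big(L^jf_{\mathrm{hl}}(T^{j+1},\mathbf x^{j+1})-V^jf_{\mathrm{hv}}(T^j,\mathbf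 y^j)-L^{j-1}f_{\mathrm{hl}}(T^j,\mathbf x^j)+V^{j-1}f_{\mathrm{hv}}(T^{j-1},\mathbf y^{j-1})\big)$; $\mathrm{aebal}^S=(-\epsilon V^S-L^{S-1}+V^{S-1})f_{\mathrm{hl}}(T^S,\mathbf x^S)+\mathbf a(P,T^S,\mathbf x^S)\cdot\big(-\epsilon V^S(\mathbf y^S-\mathbf x^S)+V^{S-1}(\mathbf y^{S-1}-\mathbf x^S)\big)+n^Sb(P,T^S,\mathbf x^S)\dot P-\big((1-\epsilon)V^Sf_{\mathrm{hl}}(T^{\mathrm{cond}},\mathbf y^S)-V^Sf_{\mathrm{hv}}(T^S,\mathbf y^S)-L^{S-1}f_{\mathrm{hl}}(T^S,\mathbf x^S)+V^{S-1}f_{\mathrm{hv}}(T^{S-1},\mathbf y^{S-1})\big)$; $\mathrm{ydef}_i^j=y_i^j-f_{\mathrm{vle},i}(P,T^j,\mathbf x^j)$, $\mathbf{ydef}^j=(\mathrm{ydef}^j_1,\dots,\mathrm{ydef}^j_C)$; $\mathrm{edef}^j=H^j-n^jf_{\mathrm{hl}}(T^j,\mathbf x^j)$; $\mathrm{ysum}^j=\sum_{i=1}^Cf_{\mathrm{vle},i}(P,T^j,\mathbf x^j)-1$; $\mathrm{xsum}^j=x_C^j-1+\sum_{i=1}^{C-1}x_i^j$; $\mathrm{hold}^j=n^j-f_{\mathrm{holdup}}(L^{j-1})$ ($j=2,\dots,S$); ordered as $g=(\mathrm{aebal}^S,\dots,\mathrm{aebal}^1,\mathbf{ydef}^1,\dots,\mathbf{ydef}^S,\mathrm{edef}^1,\dots,\mathrm{edef}^S,\mathrm{ysum}^1,\dots,\mathrm{ysum}^S,\mathrm{xsum}^1,\dots,\mathrm{xsum}^S,\mathrm{hold}^2,\dots,\mathrm{hold}^S)$.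 Differential variables $\xi=(n^1,\dots,n^S,\hat{\mathbf x}^1,\dots,\hat{\mathbf x}^S)$, $\hat{\mathbf x}^j=(x^j_1,\dots,x^j_{C-1})$; algebraic variables $\eta=(V^S,\dots,V^1,\mathbf y^1,\dots,\mathbf y^S,H^1,\dots,H^S,T^1,\dots,T^S,x_C^1,\dots,x_C^S,L^1,\dots,L^{S-1})$. $D_\eta g$ is the Jacobian of $g$ with respect to $\eta$ (with $\xi$ and controls held fixed). *)

theory Defs
  imports "HOL-Analysis.Analysis"
begin

definition C1_fun :: "('a::real_normed_vector \<Rightarrow> 'b::real_normed_vector) \<Rightarrow> bool" where
  "C1_fun f \<longleftrightarrow> (\<exists>f'. (\<forall>z. (f has_derivative blinfun_apply (f' z)) (at z)) \<and> continuous_on UNIV f')"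

definition C2_fun :: "('a::real_normed_vector \<Rightarrow> 'b::real_normed_vector) \<Rightarrow> bool" where
  "C2_fun f \<longleftrightarrow> (\<exists>f'. (\<forall>z. (f has_derivative blinfun_apply (f' z)) (at z)) \<and> C1_fun f')"

definition C1_on :: "real set \<Rightarrow> (real \<Rightarrow> 'b::real_normed_vector) \<Rightarrow> bool" where
  "C1_on I f \<longleftrightarrow> (\<exists>f'. (\<forall>t\<in>I. (f has_vector_derivative f' t) (at t within I)) \<and> continuous_on I f')"

definition tder :: "real set \<Rightarrow> (real \<Rightarrow> 'b::real_normed_vector) \<Rightarrow> real \<Rightarrow> 'b" where
  "tder I f t = vector_derivative f (at t within I)"

definition pT_vle :: "('c::finite \<Rightarrow> real \<Rightarrow> real \<Rightarrow> real^'c \<Rightarrow> real) \<Rightarrow> 'c \<Rightarrow> real \<Rightarrow> real \<Rightarrow> real^'c \<Rightarrow> real" where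
  "pT_vle fvle i P T x = deriv (\<lambda>T'. fvle i P T' x) T"

definition pP_vle :: "('c::finite \<Rightarrow> real \<Rightarrow> real \<Rightarrow> real^'c \<Rightarrow> real) \<Rightarrow> 'c \<Rightarrow> real \<Rightarrow> real \<Rightarrow> real^'c \<Rightarrow> real" where
  "pP_vle fvle i P T x = deriv (\<lambda>P'. fvle i P' T x) P"

definition grad_vle :: "('c::finite \<Rightarrow> real \<Rightarrow> real \<Rightarrow> real^'c \<Rightarrow> real) \<Rightarrow> 'c \<Rightarrow> real \<Rightarrow> real \<Rightarrow> real^'c \<Rightarrow> real^'c" where
  "grad_vle fvle i P T x = (\<chi> k. deriv (\<lambda>s. fvle i P T (x + s *\<^sub>R axis k 1)) 0)"

definition pT_hl :: "(real \<Rightarrow> real^'c::finite \<Rightarrow> real) \<Rightarrow> real \<Rightarrow> real^'c \<Rightarrow> real" where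
  "pT_hl fhl T x = deriv (\<lambda>T'. fhl T' x) T"

definition grad_hl :: "(real \<Rightarrow> real^'c::finite \<Rightarrow> real) \<Rightarrow> real \<Rightarrow> real^'c \<Rightarrow> real^'c" where
  "grad_hl fhl T x = (\<chi> k. deriv (\<lambda>s. fhl T (x + s *\<^sub>R axis k 1)) 0)"

definition avec :: "('c::finite \<Rightarrow> real \<Rightarrow> real \<Rightarrow> real^'c \<Rightarrow> real) \<Rightarrow> (real \<Rightarrow> real^'c \<Rightarrow> real)
    \<Rightarrow> real \<Rightarrow> real \<Rightarrow> real^'c \<Rightarrow> real^'c" where
  "avec fvle fhl P T x = grad_hl fhl T x
     - (pT_hl fhl T x / (\<Sum>i\<in>UNIV. pT_vle fvle i P T x)) *\<^sub>R (\<Sum>i\<in>UNIV. grad_vle fvle i P T x)"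

definition bfun :: "('c::finite \<Rightarrow> real \<Rightarrow> real \<Rightarrow> real^'c \<Rightarrow> real) \<Rightarrow> (real \<Rightarrow> real^'c \<Rightarrow> real)
    \<Rightarrow> real \<Rightarrow> real \<Rightarrow> real^'c \<Rightarrow> real" where
  "bfun fvle fhl P T x = - pT_hl fhl T x * (\<Sum>i\<in>UNIV. pP_vle fvle i P T x) / (\<Sum>i\<in>UNIV. pT_vle fvle i P T x)"

text \<open>Labels of the algebraic variables eta: V^j, y_i^j, H^j, T^j, x_C^j, L^j.\<close>
datatype 'c avar = VV nat | YV nat 'c | HV nat | TV nat | XCV nat | LV nat

datatype 'c eqn = AEBAL nat | YDEF nat 'c | EDEF nat | YSUM nat | XSUM nat | HOLD nat

definition Vars :: "nat \<Rightarrow> ('c::finite) avar set" where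
  "Vars S = VV ` {1..S} \<union> (\<lambda>(j,i). YV j i) ` ({1..S} \<times> UNIV) \<union> HV ` {1..S} \<union> TV ` {1..S}
           \<union> XCV ` {1..S} \<union> LV ` {1..S-1}"

definition Eqs :: "nat \<Rightarrow> ('c::finite) eqn set" where
  "Eqs S = AEBAL ` {1..S} \<union> (\<lambda>(j,i). YDEF j i) ` ({1..S} \<times> UNIV) \<union> EDEF ` {1..S} \<union> YSUM ` {1..S}
           \<union> XSUM ` {1..S} \<union> HOLD ` {2..S}"

text \<open>Full liquid composition x^j: components other than the distinguished component cC
  (the "C-th" one) come from the differential variables, component cC from eta.\<close>
definition xst :: "'c::finite \<Rightarrow> (nat \<Rightarrow> real^'c) \<Rightarrow> ('c avar \<Rightarrow> real) \<Rightarrow> nat \<Rightarrow> real^'c" where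
  "xst cC xh \<eta> j = (\<chi> i. if i = cC then \<eta> (XCV j) else xh j $ i)"

definition yst :: "('c::finite avar \<Rightarrow> real) \<Rightarrow> nat \<Rightarrow> real^'c" where
  "yst \<eta> j = (\<chi> i. \<eta> (YV j i))"

text \<open>The algebraic part g of system (Alt), as a function of the algebraic variables eta,
  with the differential variables (n, xh) and the control values (including dP/dt = Pd) fixed.\<close>
definition gfun :: "nat \<Rightarrow> 'c::finite \<Rightarrow> ('c \<Rightarrow> real \<Rightarrow> real \<Rightarrow> real^'c \<Rightarrow> real)
    \<Rightarrow> (real \<Rightarrow> real^'c \<Rightarrow> real) \<Rightarrow> (real \<Rightarrow> real^'c \<Rightarrow> real) \<Rightarrow> (real \<Rightarrow> real)
    \<Rightarrow> real \<Rightarrow> real \<Rightarrow> real \<Rightarrow> real \<Rightarrow> real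
    \<Rightarrow> (nat \<Rightarrow> real) \<Rightarrow> (nat \<Rightarrow> real^'c) \<Rightarrow> ('c avar \<Rightarrow> real) \<Rightarrow> 'c eqn \<Rightarrow> real" where
  "gfun S cC fvle fhl fhv fhold eps P Pd Q Tc n xh \<eta> e =
    (let V = (\<lambda>j. \<eta> (VV j)); y = yst \<eta>; H = (\<lambda>j. \<eta> (HV j)); T = (\<lambda>j. \<eta> (TV j));
         L = (\<lambda>j. \<eta> (LV j)); x = xst cC xh \<eta>;
         a = (\<lambda>j. avec fvle fhl P (T j) (x j)); b = (\<lambda>j. bfun fvle fhl P (T j) (x j))
     in case e of
       AEBAL j \<Rightarrow>
         (if j = 1 then
            (L 1 - V 1) * fhl (T 1) (x 1)
            + a 1 \<bullet> (L 1 *\<^sub>R (x 2 - x 1) - V 1 *\<^sub>R (y 1 - x 1))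
            + n 1 * b 1 * Pd
            - (L 1 * fhl (T 2) (x 2) - V 1 * fhv (T 1) (y 1) + Q)
          else if j = S then
            (- eps * V S - L (S-1) + V (S-1)) * fhl (T S) (x S)
            + a S \<bullet> (- (eps * V S) *\<^sub>R (y S - x S) + V (S-1) *\<^sub>R (y (S-1) - x S))
            + n S * b S * Pd
            - ((1 - eps) * V S * fhl Tc (y S) - V S * fhv (T S) (y S)
               - L (S-1) * fhl (T S) (x S) + V (S-1) * fhv (T (S-1)) (y (S-1)))
          else
            (L j - V j - L (j-1) + V (j-1)) * fhl (T j) (x j)
            + a j \<bullet> (L j *\<^sub>R (x (j+1) - x j) - V j *\<^sub>R (y j - x j) + V (j-1) *\<^sub>R (y (j-1) - x j))
            + n j * b j * Pd
            - (L j * fhl (T (j+1)) (x (j+1)) - V j * fhv (T j) (y j)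
               - L (j-1) * fhl (T j) (x j) + V (j-1) * fhv (T (j-1)) (y (j-1))))
     | YDEF j i \<Rightarrow> y j $ i - fvle i P (T j) (x j)
     | EDEF j \<Rightarrow> H j - n j * fhl (T j) (x j)
     | YSUM j \<Rightarrow> (\<Sum>i\<in>UNIV. fvle i P (T j) (x j)) - 1
     | XSUM j \<Rightarrow> \<eta> (XCV j) - 1 + (\<Sum>i\<in>UNIV - {cC}. xh j $ i)
     | HOLD j \<Rightarrow> n j - fhold (L (j-1)))"

definition jac :: "(('c avar \<Rightarrow> real) \<Rightarrow> 'c eqn \<Rightarrow> real) \<Rightarrow> ('c avar \<Rightarrow> real) \<Rightarrow> 'c eqn \<Rightarrow> 'c avar \<Rightarrow> real" where
  "jac G \<eta> e v = deriv (\<lambda>s. G (\<eta>(v := \<eta> v + s)) e) 0"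

definition nonsingular :: "'r set \<Rightarrow> 'k set \<Rightarrow> ('r \<Rightarrow> 'k \<Rightarrow> real) \<Rightarrow> bool" where
  "nonsingular R K M \<longleftrightarrow> (\<exists>N :: 'k \<Rightarrow> 'r \<Rightarrow> real.
      (\<forall>r\<in>R. \<forall>r'\<in>R. (\<Sum>k\<in>K. M r k * N k r') = (if r = r' then 1 else 0)) \<and>
      (\<forall>k\<in>K. \<forall>k'\<in>K. (\<Sum>r\<in>R. N k r * M r k') = (if k = k' then 1 else 0)))"

definition eta_at :: "(nat \<Rightarrow> real \<Rightarrow> real) \<Rightarrow> (nat \<Rightarrow> real \<Rightarrow> real^'c::finite) \<Rightarrow> (nat \<Rightarrow> real \<Rightarrow> real)
    \<Rightarrow> (nat \<Rightarrow> real \<Rightarrow> real) \<Rightarrow> (nat \<Rightarrow> real \<Rightarrow> real^'c) \<Rightarrow> (nat \<Rightarrow> real \<Rightarrow> real) \<Rightarrow> 'c \<Rightarrow> real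
    \<Rightarrow> 'c avar \<Rightarrow> real" where
  "eta_at V y H T x L cC t v = (case v of VV j \<Rightarrow> V j t | YV j i \<Rightarrow> y j t $ i | HV j \<Rightarrow> H j t
      | TV j \<Rightarrow> T j t | XCV j \<Rightarrow> x j t $ cC | LV j \<Rightarrow> L j t)"

definition alt_solution :: "real set \<Rightarrow> nat \<Rightarrow> 'c::finite \<Rightarrow> ('c \<Rightarrow> real \<Rightarrow> real \<Rightarrow> real^'c \<Rightarrow> real)
    \<Rightarrow> (real \<Rightarrow> real^'c \<Rightarrow> real) \<Rightarrow> (real \<Rightarrow> real^'c \<Rightarrow> real) \<Rightarrow> (real \<Rightarrow> real)
    \<Rightarrow> (real \<Rightarrow> real) \<Rightarrow> (real \<Rightarrow> real) \<Rightarrow> (real \<Rightarrow> real) \<Rightarrow> (real \<Rightarrow> real)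
    \<Rightarrow> (nat \<Rightarrow> real \<Rightarrow> real) \<Rightarrow> (nat \<Rightarrow> real \<Rightarrow> real) \<Rightarrow> (nat \<Rightarrow> real \<Rightarrow> real) \<Rightarrow> (nat \<Rightarrow> real \<Rightarrow> real)
    \<Rightarrow> (nat \<Rightarrow> real \<Rightarrow> real^'c) \<Rightarrow> (nat \<Rightarrow> real \<Rightarrow> real^'c) \<Rightarrow> (nat \<Rightarrow> real \<Rightarrow> real) \<Rightarrow> bool" where
  "alt_solution I S cC fvle fhl fhv fhold eps P Q Tc n H T V x y L \<longleftrightarrow>
    (\<forall>j\<in>{1..S}. C1_on I (n j) \<and> C1_on I (H j) \<and> C1_on I (T j) \<and> C1_on I (V j)
                 \<and> C1_on I (x j) \<and> C1_on I (y j)) \<and>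
    (\<forall>j\<in>{1..S-1}. C1_on I (L j)) \<and>
    (\<forall>t\<in>I.
      \<comment> \<open>(TM)\<close>
      tder I (n 1) t = L 1 t - V 1 t \<and>
      (\<forall>j\<in>{2..S-1}. tder I (n j) t = L j t - V j t - L (j-1) t + V (j-1) t) \<and>
      tder I (n S) t = - eps t * V S t - L (S-1) t + V (S-1) t \<and>
      \<comment> \<open>(CM_0), for the components i other than the distinguished C-th one\<close>
      (\<forall>i. i \<noteq> cC \<longrightarrow>
        tder I (\<lambda>s. x 1 s $ i) t
          = (L 1 t * (x 2 t $ i - x 1 t $ i) - V 1 t * (y 1 t $ i - x 1 t $ i)) / n 1 t \<and>
        (\<forall>j\<in>{2..S-1}. tder I (\<lambda>s. x j s $ i) t
          = (L j t * (x (j+1) t $ i - x j t $ i) - V j t * (y j t $ i - x j t $ i)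
             + V (j-1) t * (y (j-1) t $ i - x j t $ i)) / n j t) \<and>
        tder I (\<lambda>s. x S s $ i) t
          = (eps t * V S t * (x S t $ i - y S t $ i) + V (S-1) t * (y (S-1) t $ i - x S t $ i)) / n S t) \<and>
      \<comment> \<open>algebraic equations g = 0\<close>
      (\<forall>e\<in>Eqs S. gfun S cC fvle fhl fhv fhold (eps t) (P t) (tder I P t) (Q t) (Tc t)
                    (\<lambda>j. n j t) (\<lambda>j. x j t) (eta_at V y H T x L cC t) e = 0))"

end

theory Submission
  imports Defs
begin

lemma nonsing_empty: "nonsingular {} {} M"
  unfolding nonsingular_def by auto

lemma pivot:
  fixes M :: "'r \<Rightarrow> 'k \<Rightarrow> real"
  assumes fR: "finite R" and fK: "finite K" and r0: "r0 \<in> R" and k0: "k0 \<in> K"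
    and z: "\<forall>k\<in>K. k \<noteq> k0 \<longrightarrow> M r0 k = 0"
  shows "nonsingular R K M \<longleftrightarrow> (M r0 k0 \<noteq> 0 \<and> nonsingular (R-{r0}) (K-{k0}) M)"
proof -
  have rowsum: "(\<Sum>k\<in>K. M r0 k * f k) = M r0 k0 * f k0" for f
  proof -
    have "(\<Sum>k\<in>K-{k0}. M r0 k * f k) = 0" using z by (intro sum.neutral) auto
    then show ?thesis using sum.remove[OF fK k0, of "\<lambda>k. M r0 k * f k"] by simp
  qed
  show ?thesis
  proof
    assume ns: "nonsingular R K M"
    then obtain N where A: "\<forall>r\<in>R. \<forall>r'\<in>R. (\<Sum>k\<in>K. M r k * N k r') = (if r = r' then 1 else 0)"
      and B: "\<forall>k\<in>K. \<forall>k'\<in>K. (\<Sum>r\<in>R. N k r * M r k') = (if k = k' then 1 else 0)"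
      unfolding nonsingular_def by blast
    have c: "M r0 k0 * N k0 r0 = 1" using A r0 rowsum[of "\<lambda>k. N k r0"] by auto
    hence cnz: "M r0 k0 \<noteq> 0" by auto
    have Nk0: "N k0 r' = 0" if "r' \<in> R" "r' \<noteq> r0" for r'
      using A r0 that rowsum[of "\<lambda>k. N k r'"] cnz by auto
    have "nonsingular (R-{r0}) (K-{k0}) M"
      unfolding nonsingular_def
    proof (intro exI[of _ N] conjI ballI)
      fix r r' assume a: "r \<in> R-{r0}" "r' \<in> R-{r0}"
      then have "(\<Sum>k\<in>K. M r k * N k r') = (if r = r' then 1 else 0)" using A by auto
      moreover have "(\<Sum>k\<in>K. M r k * N k r') = M r k0 * N k0 r' + (\<Sum>k\<in>K-{k0}. M r k * N k r')"
        using sum.remove[OF fK k0] by blast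
      ultimately show "(\<Sum>k\<in>K-{k0}. M r k * N k r') = (if r = r' then 1 else 0)"
        using Nk0 a by auto
    next
      fix k k' assume a: "k \<in> K-{k0}" "k' \<in> K-{k0}"
      then have "(\<Sum>r\<in>R. N k r * M r k') = (if k = k' then 1 else 0)" using B by auto
      moreover have "(\<Sum>r\<in>R. N k r * M r k') = N k r0 * M r0 k' + (\<Sum>r\<in>R-{r0}. N k r * M r k')"
        using sum.remove[OF fR r0] by blast
      ultimately show "(\<Sum>r\<in>R-{r0}. N k r * M r k') = (if k = k' then 1 else 0)"
        using z a by auto
    qed
    with cnz show "M r0 k0 \<noteq> 0 \<and> nonsingular (R-{r0}) (K-{k0}) M" by blast
  next
    assume h: "M r0 k0 \<noteq> 0 \<and> nonsingular (R-{r0}) (K-{k0}) M"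
    define c where "c = M r0 k0"
    have cnz: "c \<noteq> 0" using h c_def by auto
    obtain N' where A: "\<forall>r\<in>R-{r0}. \<forall>r'\<in>R-{r0}. (\<Sum>k\<in>K-{k0}. M r k * N' k r') = (if r = r' then 1 else 0)"
      and B: "\<forall>k\<in>K-{k0}. \<forall>k'\<in>K-{k0}. (\<Sum>r\<in>R-{r0}. N' k r * M r k') = (if k = k' then 1 else 0)"
      using h unfolding nonsingular_def by blast
    define N where "N k r = (if k = k0 then (if r = r0 then 1/c else 0)
       else (if r = r0 then -(\<Sum>r'\<in>R-{r0}. N' k r' * M r' k0)/c else N' k r))" for k r
    show "nonsingular R K M"
      unfolding nonsingular_def
    proof (intro exI[of _ N] conjI ballI)
      fix r r' assume rR: "r \<in> R" and r'R: "r' \<in> R"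
      have split: "(\<Sum>k\<in>K. M r k * N k r') = M r k0 * N k0 r' + (\<Sum>k\<in>K-{k0}. M r k * N k r')"
        using sum.remove[OF fK k0] by blast
      show "(\<Sum>k\<in>K. M r k * N k r') = (if r = r' then 1 else 0)"
      proof (cases "r = r0")
        case True
        then show ?thesis using rowsum[of "\<lambda>k. N k r'"] cnz by (auto simp: N_def c_def)
      next
        case False
        show ?thesis
        proof (cases "r' = r0")
          case True
          have "(\<Sum>k\<in>K-{k0}. M r k * N k r') = (\<Sum>k\<in>K-{k0}. M r k * (-(\<Sum>r''\<in>R-{r0}. N' k r'' * M r'' k0)/c))"
            using True by (intro sum.cong) (auto simp: N_def)
          also have "\<dots> = -(\<Sum>k\<in>K-{k0}. \<Sum>r''\<in>R-{r0}. M r k * N' k r'' * M r'' k0)/c"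
            by (simp add: sum_distrib_left sum_divide_distrib sum_negf mult.assoc)
          also have "\<dots> = -(\<Sum>r''\<in>R-{r0}. (\<Sum>k\<in>K-{k0}. M r k * N' k r'') * M r'' k0)/c"
            by (subst sum.swap) (simp add: sum_distrib_right)
          also have "\<dots> = -(\<Sum>r''\<in>R-{r0}. (if r = r'' then M r'' k0 else 0))/c"
            using A False rR by (intro arg_cong[where f="\<lambda>x. -x/c"] sum.cong) auto
          also have "\<dots> = - M r k0 / c" using False rR fR by simp
          finally show ?thesis using split True False cnz by (simp add: N_def)
        next
          case False2: False
          have "(\<Sum>k\<in>K-{k0}. M r k * N k r') = (\<Sum>k\<in>K-{k0}. M r k * N' k r')"
            using False2 by (intro sum.cong) (auto simp: N_def)
          then show ?thesis using split A False False2 rR r'R by (simp add: N_def)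
        qed
      qed
    next
      fix k k' assume kK: "k \<in> K" and k'K: "k' \<in> K"
      have split: "(\<Sum>r\<in>R. N k r * M r k') = N k r0 * M r0 k' + (\<Sum>r\<in>R-{r0}. N k r * M r k')"
        using sum.remove[OF fR r0] by blast
      show "(\<Sum>r\<in>R. N k r * M r k') = (if k = k' then 1 else 0)"
      proof (cases "k = k0")
        case True
        have "(\<Sum>r\<in>R-{r0}. N k r * M r k') = 0" using True by (intro sum.neutral) (auto simp: N_def)
        then show ?thesis using split True z k'K cnz by (auto simp: N_def c_def)
      next
        case False
        have e: "(\<Sum>r\<in>R-{r0}. N k r * M r k') = (\<Sum>r\<in>R-{r0}. N' k r * M r k')"
          by (intro sum.cong) (auto simp: N_def False)
        show ?thesis
        proof (cases "k' = k0")
          case True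
          then show ?thesis using split e False cnz by (simp add: N_def c_def)
        next
          case False2: False
          then show ?thesis using split e False B z kK k'K by (simp add: N_def)
        qed
      qed
    qed
  qed
qed

lemma bulk:
  assumes "finite P" "finite R" "finite K" "P \<subseteq> R" "inj_on p P" "p ` P \<subseteq> K"
    "\<forall>r\<in>P. M r (p r) \<noteq> 0" "\<forall>r\<in>P. \<forall>k\<in>K. k \<noteq> p r \<longrightarrow> M r k = 0"
  shows "nonsingular R K M \<longleftrightarrow> nonsingular (R - P) (K - p ` P) M"
  using assms
proof (induction P arbitrary: R K rule: finite_induct)
  case empty then show ?case by simp
next
  case (insert r P)
  have "nonsingular R K M \<longleftrightarrow> nonsingular (R-{r}) (K-{p r}) M"
    using pivot[of R K r "p r" M] insert.prems by auto
  also have "\<dots> \<longleftrightarrow> nonsingular (R-{r}-P) (K-{p r}-p`P) M"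
    apply (rule insert.IH) using insert.prems insert.hyps by auto (metis imageI)
  also have "R-{r}-P = R - insert r P" by auto
  also have "K-{p r}-p`P = K - p`insert r P" using insert.hyps insert.prems by (auto simp: image_iff)
  finally show ?case .
qed

lemma tri:
  fixes M :: "'c eqn \<Rightarrow> 'c avar \<Rightarrow> real"
  assumes z: "\<And>j k. 1 \<le> j \<Longrightarrow> j < k \<Longrightarrow> k \<le> S \<Longrightarrow> M (AEBAL j) (VV k) = 0"
  shows "1 \<le> j \<Longrightarrow> nonsingular (AEBAL ` {j..S}) (VV ` {j..S}) M \<longleftrightarrow> (\<forall>k\<in>{j..S}. M (AEBAL k) (VV k) \<noteq> 0)"
proof (induction "S + 1 - j" arbitrary: j)
  case 0
  then have "{j..S} = {}" by auto
  then show ?case by (simp add: nonsing_empty)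
next
  case (Suc m)
  have jS: "j \<le> S" using Suc by auto
  have "nonsingular (AEBAL ` {j..S}) (VV ` {j..S}) M \<longleftrightarrow>
     (M (AEBAL j) (VV j) \<noteq> 0 \<and> nonsingular (AEBAL ` {j..S} - {AEBAL j}) (VV ` {j..S} - {VV j}) M)"
    by (rule pivot) (use jS Suc.prems z in auto)
  also have "AEBAL ` {j..S} - {AEBAL j} = AEBAL ` {Suc j..S}" by auto
  also have "VV ` {j..S} - {VV j} = VV ` {Suc j..S}" by auto
  also have "nonsingular (AEBAL ` {Suc j..S}) (VV ` {Suc j..S}) M \<longleftrightarrow> (\<forall>k\<in>{Suc j..S}. M (AEBAL k) (VV k) \<noteq> 0)"
    using Suc by auto
  also have "(M (AEBAL j) (VV j) \<noteq> 0 \<and> (\<forall>k\<in>{Suc j..S}. M (AEBAL k) (VV k) \<noteq> 0))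
     \<longleftrightarrow> (\<forall>k\<in>{j..S}. M (AEBAL k) (VV k) \<noteq> 0)"
    using jS by (auto simp: Ball_def) (metis Suc_leI le_neq_implies_less)
  finally show ?case .
qed


fun piv :: "'c eqn \<Rightarrow> 'c avar" where
  "piv (AEBAL j) = VV j" | "piv (YDEF j i) = YV j i" | "piv (EDEF j) = HV j"
| "piv (YSUM j) = TV j" | "piv (XSUM j) = XCV j" | "piv (HOLD j) = LV (j - 1)"

fun supp :: "'c eqn \<Rightarrow> 'c avar set" where
  "supp (AEBAL j) = UNIV" | "supp (YDEF j i) = {YV j i, TV j, XCV j}" | "supp (EDEF j) = {HV j, TV j, XCV j}"
| "supp (YSUM j) = {TV j, XCV j}" | "supp (XSUM j) = {XCV j}" | "supp (HOLD j) = {LV (j - 1)}"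

lemma jac_has: assumes "((\<lambda>s. G (\<eta>(v := \<eta> v + s)) e) has_real_derivative D) (at 0)"
  shows "jac G \<eta> e v = D"
  unfolding jac_def using assms by (rule DERIV_imp_deriv)

lemma jac_affine: assumes "\<And>s. G (\<eta>(v := \<eta> v + s)) e = A + s * B"
  shows "jac G \<eta> e v = B"
proof (rule jac_has)
  have "((\<lambda>s. A + s * B) has_real_derivative B) (at 0)"
    by (auto intro!: derivative_eq_intros)
  then show "((\<lambda>s. G (\<eta>(v := \<eta> v + s)) e) has_real_derivative B) (at 0)"
    using assms by simp
qed

lemma gfun_upd:
  assumes "v \<notin> supp e"
  shows "gfun S cC fvle fhl fhv fhold eps P Pd Q Tc n xh (\<eta>(v := a)) e = gfun S cC fvle fhl fhv fhold eps P Pd Q Tc n xh \<eta> e"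
proof -
  have xs: "xst cC xh (\<eta>(v := a)) j = xst cC xh \<eta> j" if "v \<noteq> XCV j" for j
    using that unfolding xst_def by (simp add: vec_eq_iff)
  have ys: "yst (\<eta>(v := a)) j = yst \<eta> j" if "\<forall>i. v \<noteq> YV j i" for j
    using that unfolding yst_def by (auto simp: vec_eq_iff)
  show ?thesis using assms
    by (cases e) (auto simp: gfun_def Let_def xs ys yst_def)
qed

lemma jac_zero:
  assumes "v \<notin> supp e"
  shows "jac (gfun S cC fvle fhl fhv fhold eps P Pd Q Tc n xh) \<eta> e v = 0"
  by (rule jac_affine[where A="gfun S cC fvle fhl fhv fhold eps P Pd Q Tc n xh \<eta> e"])
     (simp add: gfun_upd[OF assms])


definition dg where
  "dg S cC fvle fhl fhv eps P Tc xh \<eta> j = (let T = \<lambda>j. \<eta> (TV j); x = xst cC xh \<eta>; y = yst \<eta> in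
     if j = S then - eps * fhl (T S) (x S) - eps * (avec fvle fhl P (T S) (x S) \<bullet> (y S - x S))
        - (1 - eps) * fhl Tc (y S) + fhv (T S) (y S)
     else - fhl (T j) (x j) - avec fvle fhl P (T j) (x j) \<bullet> (y j - x j) + fhv (T j) (y j))"

lemma xst_upd: "v \<noteq> XCV j \<Longrightarrow> xst cC xh (\<eta>(v := a)) j = xst cC xh \<eta> j"
  unfolding xst_def by (simp add: vec_eq_iff)
lemma yst_upd: "(\<forall>i. v \<noteq> YV j i) \<Longrightarrow> yst (\<eta>(v := a)) j = yst \<eta> j"
  unfolding yst_def by (auto simp: vec_eq_iff)

lemma xy_VV[simp]: "xst cC xh (\<eta>(VV k := a)) = xst cC xh \<eta>" "yst (\<eta>(VV k := a)) = yst \<eta>"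
  by (auto simp: xst_def yst_def vec_eq_iff fun_eq_iff)

lemma aebal_diag:
  assumes "1 \<le> j" "j \<le> S" "S \<ge> 2"
  shows "jac (gfun S cC fvle fhl fhv fhold eps P Pd Q Tc n xh) \<eta> (AEBAL j) (VV j) = dg S cC fvle fhl fhv eps P Tc xh \<eta> j"
proof (rule jac_affine[where A="gfun S cC fvle fhl fhv fhold eps P Pd Q Tc n xh \<eta> (AEBAL j)"])
  fix s
  have xs: "\<And>k. xst cC xh (\<eta>(VV j := a)) k = xst cC xh \<eta> k" for a by (simp add: xst_upd)
  have ys: "\<And>k. yst (\<eta>(VV j := a)) k = yst \<eta> k" for a by (simp add: yst_upd)
  consider "j = 1" | "j = S" | "1 < j" "j < S" using assms by linarith
  then show "gfun S cC fvle fhl fhv fhold eps P Pd Q Tc n xh (\<eta>(VV j := \<eta> (VV j) + s)) (AEBAL j)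
    = gfun S cC fvle fhl fhv fhold eps P Pd Q Tc n xh \<eta> (AEBAL j) + s * dg S cC fvle fhl fhv eps P Tc xh \<eta> j"
  proof cases
    case 1
    then show ?thesis using assms
      by (simp add: gfun_def dg_def Let_def xs ys inner_diff_right inner_add_right algebra_simps)
  next
    case 2
    moreover have "S - 1 \<noteq> S" using assms by auto
    ultimately show ?thesis using assms
      by (simp add: gfun_def dg_def Let_def xs ys inner_diff_right inner_add_right algebra_simps)
  next
    case 3
    moreover have "j - 1 \<noteq> j" using assms by auto
    ultimately show ?thesis using assms
      by (simp add: gfun_def dg_def Let_def xs ys inner_diff_right inner_add_right algebra_simps)
  qed
qed

lemma aebal_off:
  assumes "1 \<le> j" "j < k" "k \<le> S"
  shows "jac (gfun S cC fvle fhl fhv fhold eps P Pd Q Tc n xh) \<eta> (AEBAL j) (VV k) = 0"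
proof (rule jac_affine[where A="gfun S cC fvle fhl fhv fhold eps P Pd Q Tc n xh \<eta> (AEBAL j)"])
  fix s
  have xs: "\<And>m. xst cC xh (\<eta>(VV k := a)) m = xst cC xh \<eta> m" for a by (simp add: xst_upd)
  have ys: "\<And>m. yst (\<eta>(VV k := a)) m = yst \<eta> m" for a by (simp add: yst_upd)
  have "k \<noteq> j - 1" "j \<noteq> S" "k \<noteq> 1" "k \<noteq> j" using assms by auto
  then show "gfun S cC fvle fhl fhv fhold eps P Pd Q Tc n xh (\<eta>(VV k := \<eta> (VV k) + s)) (AEBAL j)
    = gfun S cC fvle fhl fhv fhold eps P Pd Q Tc n xh \<eta> (AEBAL j) + s * 0"
    by (simp add: gfun_def Let_def xs ys)
qed

lemma one_entries:
  "jac (gfun S cC fvle fhl fhv fhold eps P Pd Q Tc n xh) \<eta> (XSUM j) (XCV j) = 1"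
  "jac (gfun S cC fvle fhl fhv fhold eps P Pd Q Tc n xh) \<eta> (EDEF j) (HV j) = 1"
  "jac (gfun S cC fvle fhl fhv fhold eps P Pd Q Tc n xh) \<eta> (YDEF j i) (YV j i) = 1"
    apply (rule jac_affine[where A="gfun S cC fvle fhl fhv fhold eps P Pd Q Tc n xh \<eta> (XSUM j)"])
    apply (simp add: gfun_def Let_def)
   apply (rule jac_affine[where A="gfun S cC fvle fhl fhv fhold eps P Pd Q Tc n xh \<eta> (EDEF j)"])
   apply (simp add: gfun_def Let_def xst_upd)
  apply (rule jac_affine[where A="gfun S cC fvle fhl fhv fhold eps P Pd Q Tc n xh \<eta> (YDEF j i)"])
  apply (simp add: gfun_def Let_def xst_upd yst_def)
  done

lemma ysum_entry:
  assumes "\<And>i. (\<lambda>T. fvle i P T (xst cC xh \<eta> j)) differentiable at (\<eta> (TV j))"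
  shows "jac (gfun S cC fvle fhl fhv fhold eps P Pd Q Tc n xh) \<eta> (YSUM j) (TV j)
     = (\<Sum>i\<in>UNIV. pT_vle fvle i P (\<eta> (TV j)) (xst cC xh \<eta> j))"
proof (rule jac_has)
  have e: "gfun S cC fvle fhl fhv fhold eps P Pd Q Tc n xh (\<eta>(TV j := \<eta> (TV j) + s)) (YSUM j)
     = (\<Sum>i\<in>UNIV. fvle i P (s + \<eta> (TV j)) (xst cC xh \<eta> j)) - 1" for s
    by (simp add: gfun_def Let_def xst_upd add.commute)
  have d: "((\<lambda>s. fvle i P (s + \<eta> (TV j)) (xst cC xh \<eta> j)) has_real_derivative pT_vle fvle i P (\<eta> (TV j)) (xst cC xh \<eta> j)) (at 0)" for i
  proof -
    have "((\<lambda>T. fvle i P T (xst cC xh \<eta> j)) has_real_derivative pT_vle fvle i P (\<eta> (TV j)) (xst cC xh \<eta> j)) (at (0 + \<eta> (TV j)))"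
      unfolding pT_vle_def using assms[of i] DERIV_deriv_iff_real_differentiable by simp
    then show ?thesis using DERIV_shift[of "\<lambda>T. fvle i P T (xst cC xh \<eta> j)" _ 0 "\<eta> (TV j)"] by simp
  qed
  have "((\<lambda>s. (\<Sum>i\<in>UNIV. fvle i P (s + \<eta> (TV j)) (xst cC xh \<eta> j)) - 1) has_real_derivative (\<Sum>i\<in>UNIV. pT_vle fvle i P (\<eta> (TV j)) (xst cC xh \<eta> j)) - 0) (at 0)"
    by (intro derivative_intros d)
  then show "((\<lambda>s. gfun S cC fvle fhl fhv fhold eps P Pd Q Tc n xh (\<eta>(TV j := \<eta> (TV j) + s)) (YSUM j)) has_real_derivative (\<Sum>i\<in>UNIV. pT_vle fvle i P (\<eta> (TV j)) (xst cC xh \<eta> j))) (at 0)"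
    by (simp add: e)
qed

lemma hold_entry:
  assumes "fhold differentiable at (\<eta> (LV (j - 1)))"
  shows "jac (gfun S cC fvle fhl fhv fhold eps P Pd Q Tc n xh) \<eta> (HOLD j) (LV (j - 1))
     = - deriv fhold (\<eta> (LV (j - 1)))"
proof (rule jac_has)
  have e: "gfun S cC fvle fhl fhv fhold eps P Pd Q Tc n xh (\<eta>(LV (j - 1) := \<eta> (LV (j - 1)) + s)) (HOLD j)
     = n j - fhold (s + \<eta> (LV (j - 1)))" for s
    by (simp add: gfun_def Let_def add.commute)
  have "(fhold has_real_derivative deriv fhold (\<eta> (LV (j - 1)))) (at (0 + \<eta> (LV (j - 1))))"
    using assms DERIV_deriv_iff_real_differentiable by simp
  then have "((\<lambda>s. fhold (s + \<eta> (LV (j - 1)))) has_real_derivative deriv fhold (\<eta> (LV (j - 1)))) (at 0)"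
    using DERIV_shift[of fhold _ 0 "\<eta> (LV (j - 1))"] by simp
  then have D: "((\<lambda>s. n j - fhold (s + \<eta> (LV (j - 1)))) has_real_derivative 0 - deriv fhold (\<eta> (LV (j - 1)))) (at 0)"
    by (intro derivative_intros)
  then show "((\<lambda>s. gfun S cC fvle fhl fhv fhold eps P Pd Q Tc n xh (\<eta>(LV (j - 1) := \<eta> (LV (j - 1)) + s)) (HOLD j)) has_real_derivative - deriv fhold (\<eta> (LV (j - 1)))) (at 0)"
    unfolding e using D by simp
qed


lemma core:
  fixes S :: nat and cC :: "'c::finite"
  assumes S2: "S \<ge> 2"
    and dv: "\<And>i j. (\<lambda>T. fvle i P T (xst cC xh \<eta> j)) differentiable at (\<eta> (TV j))"
    and dh: "\<And>j. fhold differentiable at (\<eta> (LV j))"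
    and hn: "\<forall>j\<in>{1..S-1}. deriv fhold (\<eta> (LV j)) \<noteq> 0"
    and vn: "\<forall>j\<in>{1..S}. (\<Sum>i\<in>UNIV. pT_vle fvle i P (\<eta> (TV j)) (xst cC xh \<eta> j)) \<noteq> 0"
  shows "nonsingular (Eqs S) (Vars S) (jac (gfun S cC fvle fhl fhv fhold eps P Pd Q Tc n xh) \<eta>)
     \<longleftrightarrow> (\<forall>k\<in>{1..S}. dg S cC fvle fhl fhv eps P Tc xh \<eta> k \<noteq> 0)"
proof -
  define M where "M = jac (gfun S cC fvle fhl fhv fhold eps P Pd Q Tc n xh) \<eta>"
  have Mz: "M e v = 0" if "v \<notin> supp e" for e v
    unfolding M_def using that by (rule jac_zero)
  have Mo: "M (XSUM j) (XCV j) = 1" "M (EDEF j) (HV j) = 1" "M (YDEF j i) (YV j i) = 1" for j i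
    unfolding M_def by (rule one_entries)+
  have My: "M (YSUM j) (TV j) = (\<Sum>i\<in>UNIV. pT_vle fvle i P (\<eta> (TV j)) (xst cC xh \<eta> j))" for j
    unfolding M_def by (rule ysum_entry) (rule dv)
  have Mh: "M (HOLD j) (LV (j - 1)) = - deriv fhold (\<eta> (LV (j - 1)))" for j
    unfolding M_def by (rule hold_entry) (rule dh)
  define P1 where "P1 = (XSUM ` {1..S} :: 'c eqn set)"
  define P2 where "P2 = (YSUM ` {1..S} :: 'c eqn set)"
  define P3 where "P3 = (EDEF ` {1..S} :: 'c eqn set)"
  define P4 where "P4 = (HOLD ` {2..S} :: 'c eqn set)"
  define P5 where "P5 = ((\<lambda>(j,i). YDEF j i) ` ({1..S} \<times> UNIV) :: 'c eqn set)"
  have fE: "finite (Eqs S :: 'c eqn set)" unfolding Eqs_def by simp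
  have fV: "finite (Vars S :: 'c avar set)" unfolding Vars_def by simp
  have i1: "piv ` P1 = XCV ` {1..S}" unfolding P1_def by (auto simp: image_image)
  have i2: "piv ` P2 = TV ` {1..S}" unfolding P2_def by (auto simp: image_image)
  have i3: "piv ` P3 = HV ` {1..S}" unfolding P3_def by (auto simp: image_image)
  have i4: "piv ` P4 = LV ` {1..S-1}" unfolding P4_def
  proof (auto simp: image_image)
    fix k assume "Suc 0 \<le> k" "k \<le> S - Suc 0"
    then show "LV k \<in> (\<lambda>x. LV (x - Suc 0)) ` {2..S}"
      by (intro image_eqI[of _ _ "Suc k"]) auto
  next
    fix k assume "2 \<le> k" "k \<le> S"
    then show "LV (k - Suc 0) \<in> LV ` {Suc 0..S - Suc 0}" by (intro imageI) auto
  qed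
  have i5: "piv ` P5 = (\<lambda>(j,i). YV j i) ` ({1..S} \<times> UNIV)" unfolding P5_def
    by (force simp: image_iff)
  have h4a: "LV (j - 1) \<in> LV ` {1..S-1}" if "2 \<le> j" "j \<le> S" for j
    using that by (intro imageI) auto
  have h4b: "deriv fhold (\<eta> (LV (j - 1))) \<noteq> 0" if "2 \<le> j" "j \<le> S" for j
  proof -
    have "j - 1 \<in> {1..S-1}" using that by auto
    then show ?thesis using hn by blast
  qed
  have s1: "nonsingular (Eqs S) (Vars S) M \<longleftrightarrow> nonsingular (Eqs S - P1) (Vars S - piv ` P1) M"
    by (rule bulk) (auto simp: P1_def P2_def P3_def P4_def P5_def image_image Eqs_def Vars_def inj_on_def Mo fE fV intro!: Mz)
  also have s2: "\<dots> \<longleftrightarrow> nonsingular (Eqs S - P1 - P2) (Vars S - piv ` P1 - piv ` P2) M"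
    apply (rule bulk)
    using vn by (auto simp: P1_def P2_def P3_def P4_def P5_def image_image Eqs_def Vars_def inj_on_def My fE fV intro!: Mz)
  also have s3: "\<dots> \<longleftrightarrow> nonsingular (Eqs S - P1 - P2 - P3) (Vars S - piv ` P1 - piv ` P2 - piv ` P3) M"
    by (rule bulk) (auto simp: P1_def P2_def P3_def P4_def P5_def image_image Eqs_def Vars_def inj_on_def Mo fE fV intro!: Mz)
  also have s4: "\<dots> \<longleftrightarrow> nonsingular (Eqs S - P1 - P2 - P3 - P4) (Vars S - piv ` P1 - piv ` P2 - piv ` P3 - piv ` P4) M"
  proof (rule bulk)
    show "piv ` P4 \<subseteq> Vars S - piv ` P1 - piv ` P2 - piv ` P3"
      unfolding i1 i2 i3 i4 Vars_def by auto
    show "\<forall>r\<in>P4. M r (piv r) \<noteq> 0"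
    proof
      fix r assume "r \<in> P4"
      then obtain j where "r = HOLD j" "2 \<le> j" "j \<le> S" unfolding P4_def by auto
      then show "M r (piv r) \<noteq> 0" using Mh[of j] h4b[of j] by simp
    qed
  qed (auto simp: P1_def P2_def P3_def P4_def P5_def image_image Eqs_def Vars_def inj_on_def fE fV intro!: Mz)
  also have s5: "\<dots> \<longleftrightarrow> nonsingular (Eqs S - P1 - P2 - P3 - P4 - P5) (Vars S - piv ` P1 - piv ` P2 - piv ` P3 - piv ` P4 - piv ` P5) M"
  proof (rule bulk)
    show "piv ` P5 \<subseteq> Vars S - piv ` P1 - piv ` P2 - piv ` P3 - piv ` P4"
      unfolding i1 i2 i3 i4 i5 Vars_def by auto
  qed (auto simp: P1_def P2_def P3_def P4_def P5_def image_image Eqs_def Vars_def inj_on_def Mo fE fV intro!: Mz)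
  also have "Eqs S - P1 - P2 - P3 - P4 - P5 = AEBAL ` {1..S}"
    unfolding P1_def P2_def P3_def P4_def P5_def Eqs_def by auto
  also have "Vars S - piv ` P1 - piv ` P2 - piv ` P3 - piv ` P4 - piv ` P5 = VV ` {1..S}"
    unfolding i1 i2 i3 i4 i5 Vars_def by auto
  also have "nonsingular (AEBAL ` {1..S}) (VV ` {1..S}) M \<longleftrightarrow> (\<forall>k\<in>{1..S}. M (AEBAL k) (VV k) \<noteq> 0)"
    by (rule tri) (auto simp: M_def aebal_off)
  also have "\<dots> \<longleftrightarrow> (\<forall>k\<in>{1..S}. dg S cC fvle fhl fhv eps P Tc xh \<eta> k \<noteq> 0)"
    using S2 by (auto simp: M_def aebal_diag)
  finally show ?thesis unfolding M_def .
qed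


lemma diff_vle:
  assumes "C2_fun (\<lambda>(p, tt, z). fvle i p tt z)"
  shows "(\<lambda>T'. fvle i p T' z) differentiable at T0"
proof -
  from assms obtain f' where "\<forall>w. ((\<lambda>(p, tt, z). fvle i p tt z) has_derivative blinfun_apply (f' w)) (at w)"
    unfolding C2_fun_def by blast
  then have d1: "(\<lambda>(p, tt, z). fvle i p tt z) differentiable at (p, T0, z)"
    unfolding differentiable_def by blast
  have d2: "(\<lambda>T'. (p, T', z)) differentiable at T0"
    unfolding differentiable_def by (auto intro!: derivative_intros exI)
  have "((\<lambda>(p, tt, z). fvle i p tt z) \<circ> (\<lambda>T'. (p, T', z))) differentiable at T0"
    by (rule differentiable_chain_at[OF d2]) (simp add: d1)
  then show ?thesis by (simp add: o_def)
qed

lemma diff_hold: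
  assumes "C1_fun fhold" shows "fhold differentiable at z"
  using assms unfolding C1_fun_def differentiable_def by blast

lemma xst_eta: "xst cC (\<lambda>j. x j t) (eta_at V y H T x L cC t) j = x j t"
  unfolding xst_def eta_at_def by (simp add: vec_eq_iff)
lemma yst_eta: "yst (eta_at V y H T x L cC t) j = y j t"
  unfolding yst_def eta_at_def by (simp add: vec_eq_iff)

theorem mainTheorem10:
  fixes S :: nat and cC :: "'c::finite" and I :: "real set"
    and fvle :: "'c \<Rightarrow> real \<Rightarrow> real \<Rightarrow> real^'c \<Rightarrow> real"
    and fhl fhv :: "real \<Rightarrow> real^'c \<Rightarrow> real" and fhold :: "real \<Rightarrow> real"
    and eps P Q Tc :: "real \<Rightarrow> real"
    and n H T V L :: "nat \<Rightarrow> real \<Rightarrow> real" and x y :: "nat \<Rightarrow> real \<Rightarrow> real^'c"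
  assumes "S \<ge> 2" and "CARD('c) \<ge> 2" and "is_interval I"
    and "\<forall>i. C2_fun (\<lambda>(p, tt, z). fvle i p tt z)"
    and "C2_fun (\<lambda>(tt, z). fhl tt z)"
    and "C1_fun (\<lambda>(tt, z). fhv tt z)"
    and "C1_fun fhold"
    and "C1_on I eps" and "C1_on I P" and "C1_on I Q" and "C1_on I Tc"
    and "alt_solution I S cC fvle fhl fhv fhold eps P Q Tc n H T V x y L"
    and "\<forall>t\<in>I. \<forall>j\<in>{1..S-1}. deriv fhold (L j t) \<noteq> 0"
    and "\<forall>t\<in>I. \<forall>j\<in>{1..S}. (\<Sum>i\<in>UNIV. pT_vle fvle i (P t) (T j t) (x j t)) \<noteq> 0"
  shows "(\<forall>t\<in>I. nonsingular (Eqs S) (Vars S)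
            (jac (gfun S cC fvle fhl fhv fhold (eps t) (P t) (tder I P t) (Q t) (Tc t)
                    (\<lambda>j. n j t) (\<lambda>j. x j t))
                 (eta_at V y H T x L cC t)))
     \<longleftrightarrow>
     (\<forall>t\<in>I.
        - eps t * fhl (T S t) (x S t)
        - eps t * (avec fvle fhl (P t) (T S t) (x S t) \<bullet> (y S t - x S t))
        - (1 - eps t) * fhl (Tc t) (y S t) + fhv (T S t) (y S t) \<noteq> 0
      \<and> (\<forall>j\<in>{1..S-1}.
        - fhl (T j t) (x j t) - avec fvle fhl (P t) (T j t) (x j t) \<bullet> (y j t - x j t)
        + fhv (T j t) (y j t) \<noteq> 0))"
proof -
  have pt: "nonsingular (Eqs S) (Vars S)
            (jac (gfun S cC fvle fhl fhv fhold (eps t) (P t) (tder I P t) (Q t) (Tc t)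
                    (\<lambda>j. n j t) (\<lambda>j. x j t))
                 (eta_at V y H T x L cC t))
     \<longleftrightarrow>
     (- eps t * fhl (T S t) (x S t)
        - eps t * (avec fvle fhl (P t) (T S t) (x S t) \<bullet> (y S t - x S t))
        - (1 - eps t) * fhl (Tc t) (y S t) + fhv (T S t) (y S t) \<noteq> 0
      \<and> (\<forall>j\<in>{1..S-1}.
        - fhl (T j t) (x j t) - avec fvle fhl (P t) (T j t) (x j t) \<bullet> (y j t - x j t)
        + fhv (T j t) (y j t) \<noteq> 0))" if tI: "t \<in> I" for t
  proof -
    let ?\<eta> = "eta_at V y H T x L cC t"
    have eT: "?\<eta> (TV j) = T j t" and eL: "?\<eta> (LV j) = L j t" for j
      by (simp_all add: eta_at_def)
    have "nonsingular (Eqs S) (Vars S)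
            (jac (gfun S cC fvle fhl fhv fhold (eps t) (P t) (tder I P t) (Q t) (Tc t)
                    (\<lambda>j. n j t) (\<lambda>j. x j t)) ?\<eta>)
       \<longleftrightarrow> (\<forall>k\<in>{1..S}. dg S cC fvle fhl fhv (eps t) (P t) (Tc t) (\<lambda>j. x j t) ?\<eta> k \<noteq> 0)"
    proof (rule core)
      show "S \<ge> 2" by fact
      show "(\<lambda>T'. fvle i (P t) T' (xst cC (\<lambda>j. x j t) ?\<eta> j)) differentiable at (?\<eta> (TV j))" for i j
        by (rule diff_vle) (use assms(4) in blast)
      show "fhold differentiable at (?\<eta> (LV j))" for j using assms(7) diff_hold by blast
      show "\<forall>j\<in>{1..S-1}. deriv fhold (?\<eta> (LV j)) \<noteq> 0" using assms(13) tI eL by simp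
      show "\<forall>j\<in>{1..S}. (\<Sum>i\<in>UNIV. pT_vle fvle i (P t) (?\<eta> (TV j)) (xst cC (\<lambda>j. x j t) ?\<eta> j)) \<noteq> 0"
        using assms(14) tI by (simp add: eT xst_eta)
    qed
    also have "\<dots> \<longleftrightarrow> (- eps t * fhl (T S t) (x S t)
        - eps t * (avec fvle fhl (P t) (T S t) (x S t) \<bullet> (y S t - x S t))
        - (1 - eps t) * fhl (Tc t) (y S t) + fhv (T S t) (y S t) \<noteq> 0
      \<and> (\<forall>j\<in>{1..S-1}.
        - fhl (T j t) (x j t) - avec fvle fhl (P t) (T j t) (x j t) \<bullet> (y j t - x j t)
        + fhv (T j t) (y j t) \<noteq> 0))"
    proof -
      have dS: "dg S cC fvle fhl fhv (eps t) (P t) (Tc t) (\<lambda>j. x j t) ?\<eta> S =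
        - eps t * fhl (T S t) (x S t)
        - eps t * (avec fvle fhl (P t) (T S t) (x S t) \<bullet> (y S t - x S t))
        - (1 - eps t) * fhl (Tc t) (y S t) + fhv (T S t) (y S t)"
        by (simp add: dg_def Let_def eT xst_eta yst_eta)
      have dj: "dg S cC fvle fhl fhv (eps t) (P t) (Tc t) (\<lambda>j. x j t) ?\<eta> j =
        - fhl (T j t) (x j t) - avec fvle fhl (P t) (T j t) (x j t) \<bullet> (y j t - x j t)
        + fhv (T j t) (y j t)" if "j \<noteq> S" for j
        using that by (simp add: dg_def Let_def eT xst_eta yst_eta)
      have iS: "{1..S} = insert S {1..S-1}" using assms(1) by auto
      have "(\<forall>k\<in>{1..S}. dg S cC fvle fhl fhv (eps t) (P t) (Tc t) (\<lambda>j. x j t) ?\<eta> k \<noteq> 0) \<longleftrightarrow>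
         (dg S cC fvle fhl fhv (eps t) (P t) (Tc t) (\<lambda>j. x j t) ?\<eta> S \<noteq> 0 \<and>
          (\<forall>j\<in>{1..S-1}. dg S cC fvle fhl fhv (eps t) (P t) (Tc t) (\<lambda>j. x j t) ?\<eta> j \<noteq> 0))"
        unfolding iS by simp
      also have "\<dots> \<longleftrightarrow> (- eps t * fhl (T S t) (x S t)
        - eps t * (avec fvle fhl (P t) (T S t) (x S t) \<bullet> (y S t - x S t))
        - (1 - eps t) * fhl (Tc t) (y S t) + fhv (T S t) (y S t) \<noteq> 0
      \<and> (\<forall>j\<in>{1..S-1}.
        - fhl (T j t) (x j t) - avec fvle fhl (P t) (T j t) (x j t) \<bullet> (y j t - x j t)
        + fhv (T j t) (y j t) \<noteq> 0))"
        using dS assms(1) by (intro conj_cong ball_cong refl) (auto simp: dj)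
      finally show ?thesis .
    qed
    finally show ?thesis .
  qed
  show ?thesis using pt by blast
qed

end
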